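(* Let $\Sigma$ be an alphabet. Then $\mathrm{RevL}(\mathbb{B},\Sigma)\subseteq\mathrm{RevL}(\mathbb{F}_2,\Sigma)$.
   Context: $\mathbb{F}_2$ is the two-element field and $\mathbb{B}=(\{0,1\},\lor,\land,0,1)$ the Boolean semiring. For a semiring $S$ and finite nonempty alphabet $\Sigma$, a series is a map $r\colon\Sigma^*\to S$ with value $(r,w)$ and support $\mathrm{supp}(r)=\{w\mid(r,w)\neq0\}$. A weighted automaton over $S$ and $\Sigma$ is $\mathcal{A}=(Q,\sigma,\iota,\tau)$ with $Q$ finite, $\sigma\colon Q\times\Sigma\times Q\to S$, $\iota,\tau\colon Q\to S$; a run on $w=a_1\cdots a_t$ is $q_0a_1q_1\cdots a_tq_t$ with all $\sigma(q_{k-1},a_k,q_k)\neq0$, of weight $\iota(q_0)\sigma(q_0,a_1,q_1)\cdots\sigma(q_{t-1},a_t,q_t)\tau(q_t)$, and $(\|\mathcal{A}\|,w)$ is the sum of weights of all runs on $w$. $\mathcal{A}$ is reversible if for all $p,p',q,q'\in Q$, $a\in\Sigma$: $\sigma(p,a,q)\neq0\neq\sigma(p,a,q')$ implies $q=q'$, and $\sigma(p,a,q)\neq0\neq\sigma(p',a,q)$ implies $p=p'$. $\mathrm{RevL}(S,\Sigma)$ is the set of supports of series realised by reversible weighted automata over $S$ and $\Sigma$. Thus $\mathrm{RevL}(\mathbb{B},\Sigma)$ is the set of languages recognised by reversible finite automata in the sense of Pin: nondeterministic finite automata whose transition relation is both deterministic and codeterministic, with arbitrary sets of initial and final states. *)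

theory Defs
  imports Main "HOL-Library.Z2"
begin

datatype boolsr = BF | BT

instantiation boolsr :: "{comm_semiring_1}"
begin
definition zero_boolsr :: boolsr where "zero_boolsr = BF"
definition one_boolsr :: boolsr where "one_boolsr = BT"
fun plus_boolsr :: "boolsr \<Rightarrow> boolsr \<Rightarrow> boolsr" where
  "plus_boolsr BF y = y" | "plus_boolsr BT y = BT"
fun times_boolsr :: "boolsr \<Rightarrow> boolsr \<Rightarrow> boolsr" where
  "times_boolsr BF y = BF" | "times_boolsr BT y = y"
instance
proof
  fix a b c :: boolsr
  show "a + b + c = a + (b + c)" by (cases a; cases b; cases c) auto
  show "a + b = b + a" by (cases a; cases b) auto
  show "0 + a = a" by (simp add: zero_boolsr_def)
  show "a * b * c = a * (b * c)" by (cases a; cases b; cases c) auto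
  show "a * b = b * a" by (cases a; cases b) auto
  show "1 * a = a" by (simp add: one_boolsr_def)
  show "(a + b) * c = a * c + b * c" by (cases a; cases b; cases c) auto
  show "0 * a = 0" by (simp add: zero_boolsr_def)
  show "a * 0 = 0" by (cases a) (auto simp: zero_boolsr_def)
  show "(0::boolsr) \<noteq> 1" by (simp add: zero_boolsr_def one_boolsr_def)
qed
end

text \<open>Values of sigma, iota, tau
  outside Q are irrelevant (runs only use states of Q).\<close>

record ('a, 's) wautomaton =
  states :: "nat set"
  trans :: "nat \<Rightarrow> 'a \<Rightarrow> nat \<Rightarrow> 's"
  init  :: "nat \<Rightarrow> 's"
  fin   :: "nat \<Rightarrow> 's"

definition is_run :: "('a, 's::zero) wautomaton \<Rightarrow> 'a list \<Rightarrow> nat list \<Rightarrow> bool" where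
  "is_run A w qs \<longleftrightarrow> length qs = Suc (length w) \<and> set qs \<subseteq> states A \<and>
     (\<forall>k < length w. trans A (qs ! k) (w ! k) (qs ! Suc k) \<noteq> 0)"

definition run_weight :: "('a, 's::monoid_mult) wautomaton \<Rightarrow> 'a list \<Rightarrow> nat list \<Rightarrow> 's" where
  "run_weight A w qs =
     foldl (*) (init A (qs ! 0)) (map (\<lambda>k. trans A (qs ! k) (w ! k) (qs ! Suc k)) [0..<length w])
     * fin A (qs ! length w)"

text \<open>(||A||, w) = sum of weights of all runs on w (a finite set when Q is finite).\<close>

definition behaviour :: "('a, 's::semiring_1) wautomaton \<Rightarrow> 'a list \<Rightarrow> 's" where
  "behaviour A w = (\<Sum>qs \<in> {qs. is_run A w qs}. run_weight A w qs)"

definition support :: "('a list \<Rightarrow> 's::zero) \<Rightarrow> 'a list set" where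
  "support r = {w. r w \<noteq> 0}"

definition reversible :: "('a, 's::zero) wautomaton \<Rightarrow> bool" where
  "reversible A \<longleftrightarrow>
     (\<forall>p\<in>states A. \<forall>q\<in>states A. \<forall>q'\<in>states A. \<forall>a.
        trans A p a q \<noteq> 0 \<and> trans A p a q' \<noteq> 0 \<longrightarrow> q = q') \<and>
     (\<forall>p\<in>states A. \<forall>p'\<in>states A. \<forall>q\<in>states A. \<forall>a.
        trans A p a q \<noteq> 0 \<and> trans A p' a q \<noteq> 0 \<longrightarrow> p = p')"

text \<open>RevL(S, Sigma), where S is given by the type 's and the alphabet Sigma is the
  finite (nonempty) type 'a.\<close>

definition RevL :: "'s::semiring_1 itself \<Rightarrow> 'a::finite itself \<Rightarrow> 'a list set set" where
  "RevL S Sig = {support (behaviour A) | A :: ('a, 's) wautomaton.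
                    finite (states A) \<and> reversible A}"

end

theory Submission
  imports Defs "HOL-Library.Nat_Bijection"
begin

lemma is_run_Nil: "is_run A [] qs \<longleftrightarrow> (\<exists>p\<in>states A. qs = [p])"
  unfolding is_run_def by (cases qs) auto

lemma is_run_Cons:
  "is_run A (a # w) qs \<longleftrightarrow>
     (\<exists>p qs'. qs = p # qs' \<and> p \<in> states A \<and> is_run A w qs' \<and> trans A p a (qs' ! 0) \<noteq> 0)"
proof
  assume r: "is_run A (a # w) qs"
  then obtain p qs' where qs: "qs = p # qs'" unfolding is_run_def by (cases qs) auto
  have l: "length qs' = Suc (length w)" using r qs unfolding is_run_def by auto
  have "is_run A w qs'" unfolding is_run_def
  proof (intro conjI allI impI)
    show "set qs' \<subseteq> states A" using r qs unfolding is_run_def by auto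
    fix k assume "k < length w"
    then have "Suc k < length (a # w)" by simp
    then have "trans A (qs ! Suc k) ((a # w) ! Suc k) (qs ! Suc (Suc k)) \<noteq> 0"
      using r unfolding is_run_def by blast
    then show "trans A (qs' ! k) (w ! k) (qs' ! Suc k) \<noteq> 0" using qs by simp
  qed (use l in auto)
  moreover have "trans A p a (qs' ! 0) \<noteq> 0"
    using r qs unfolding is_run_def by (metis length_Cons nth_Cons_0 nth_Cons_Suc zero_less_Suc)
  moreover have "p \<in> states A" using r qs unfolding is_run_def by auto
  ultimately show "\<exists>p qs'. qs = p # qs' \<and> p \<in> states A \<and> is_run A w qs' \<and> trans A p a (qs' ! 0) \<noteq> 0"
    using qs by blast
next
  assume "\<exists>p qs'. qs = p # qs' \<and> p \<in> states A \<and> is_run A w qs' \<and> trans A p a (qs' ! 0) \<noteq> 0"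
  then obtain p qs' where qs: "qs = p # qs'" and p: "p \<in> states A" and r: "is_run A w qs'"
    and t: "trans A p a (qs' ! 0) \<noteq> 0" by blast
  show "is_run A (a # w) qs" unfolding is_run_def
  proof (intro conjI allI impI)
    show "length qs = Suc (length (a # w))" using r qs unfolding is_run_def by auto
    show "set qs \<subseteq> states A" using r qs p unfolding is_run_def by auto
    fix k assume k: "k < length (a # w)"
    show "trans A (qs ! k) ((a # w) ! k) (qs ! Suc k) \<noteq> 0"
    proof (cases k)
      case 0 then show ?thesis using qs t by simp
    next
      case (Suc j)
      then have "j < length w" using k by simp
      then show ?thesis using r qs Suc unfolding is_run_def by simp
    qed
  qed
qed

fun reach :: "('a, 's::zero) wautomaton \<Rightarrow> nat \<Rightarrow> 'a list \<Rightarrow> nat \<Rightarrow> bool" where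
  "reach A p [] q = (p \<in> states A \<and> q = p)"
| "reach A p (a # w) q = (p \<in> states A \<and> (\<exists>p'. trans A p a p' \<noteq> 0 \<and> reach A p' w q))"

lemma reach_states: "reach A p w q \<Longrightarrow> p \<in> states A \<and> q \<in> states A"
  by (induction w arbitrary: p) auto

lemma reach_run: "reach A p w q \<longleftrightarrow> (\<exists>qs. is_run A w qs \<and> qs ! 0 = p \<and> qs ! length w = q)"
proof (induction w arbitrary: p)
  case Nil
  then show ?case by (auto simp: is_run_Nil)
next
  case (Cons a w)
  show ?case
  proof
    assume "reach A p (a # w) q"
    then obtain p' where p: "p \<in> states A" and t: "trans A p a p' \<noteq> 0" and r: "reach A p' w q" by auto
    from r Cons obtain qs where "is_run A w qs" "qs ! 0 = p'" "qs ! length w = q" by blast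
    then show "\<exists>qs. is_run A (a # w) qs \<and> qs ! 0 = p \<and> qs ! length (a # w) = q"
      using p t by (intro exI[of _ "p # qs"]) (auto simp: is_run_Cons)
  next
    assume "\<exists>qs. is_run A (a # w) qs \<and> qs ! 0 = p \<and> qs ! length (a # w) = q"
    then obtain qs where "is_run A (a # w) qs" "qs ! 0 = p" "qs ! length (a # w) = q" by blast
    then obtain qs' where "p \<in> states A" "is_run A w qs'" "trans A p a (qs' ! 0) \<noteq> 0" "qs' ! length w = q"
      by (auto simp: is_run_Cons)
    then show "reach A p (a # w) q" using Cons by auto
  qed
qed

definition det :: "('a, 's::zero) wautomaton \<Rightarrow> bool" where
  "det A \<longleftrightarrow> (\<forall>p\<in>states A. \<forall>q\<in>states A. \<forall>q'\<in>states A. \<forall>a.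
        trans A p a q \<noteq> 0 \<and> trans A p a q' \<noteq> 0 \<longrightarrow> q = q')"

lemma run_unique:
  assumes "det A" shows "is_run A w qs \<Longrightarrow> is_run A w qs' \<Longrightarrow> qs ! 0 = qs' ! 0 \<Longrightarrow> qs = qs'"
proof (induction w arbitrary: qs qs')
  case Nil
  then show ?case by (auto simp: is_run_Nil)
next
  case (Cons a w)
  from Cons.prems(1) obtain p r where qs: "qs = p # r" "p \<in> states A" "is_run A w r" "trans A p a (r ! 0) \<noteq> 0"
    by (auto simp: is_run_Cons)
  from Cons.prems(2) obtain p' r' where qs': "qs' = p' # r'" "is_run A w r'" "trans A p' a (r' ! 0) \<noteq> 0"
    by (auto simp: is_run_Cons)
  have pp: "p = p'" using Cons.prems(3) qs qs' by simp
  have "r ! 0 \<in> states A" "r' ! 0 \<in> states A" using qs(3) qs'(2) unfolding is_run_def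
    by (auto simp: subset_iff)
  then have "r ! 0 = r' ! 0" using assms qs qs' pp unfolding det_def by blast
  then have "r = r'" using Cons.IH qs qs' by blast
  then show ?case using qs qs' pp by simp
qed

lemma reach_det: "det A \<Longrightarrow> reach A p w q \<Longrightarrow> reach A p w q' \<Longrightarrow> q = q'"
proof (induction w arbitrary: p)
  case Nil then show ?case by simp
next
  case (Cons a w)
  then obtain p1 p2 where h: "p \<in> states A" "trans A p a p1 \<noteq> 0" "reach A p1 w q"
    "trans A p a p2 \<noteq> 0" "reach A p2 w q'" by auto
  have "p1 \<in> states A" "p2 \<in> states A" using h reach_states by metis+
  then have "p1 = p2" using h Cons.prems(1) unfolding det_def by blast
  then show ?case using Cons h by blast
qed

lemma foldl_ones: "(\<forall>y\<in>set ys. y = 1) \<Longrightarrow> foldl (*) (x::'s::monoid_mult) ys = x"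
  by (induction ys arbitrary: x) auto

lemma run_weight_simple:
  assumes one: "\<And>x::'s::semiring_1. x \<noteq> 0 \<Longrightarrow> x = 1"
    and r: "is_run (A :: ('a, 's) wautomaton) w qs"
  shows "run_weight A w qs = init A (qs ! 0) * fin A (qs ! length w)"
proof -
  have "\<forall>y\<in>set (map (\<lambda>k. trans A (qs ! k) (w ! k) (qs ! Suc k)) [0..<length w]). y = 1"
    using r one unfolding is_run_def by auto
  then show ?thesis unfolding run_weight_def by (simp add: foldl_ones)
qed

lemma finite_runs: "finite (states A) \<Longrightarrow> finite {qs. is_run A w qs}"
proof -
  assume f: "finite (states A)"
  have "{qs. is_run A w qs} \<subseteq> {qs. set qs \<subseteq> states A \<and> length qs = Suc (length w)}"
    unfolding is_run_def by auto
  then show ?thesis using finite_lists_length_eq[OF f] finite_subset by blast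
qed

lemma boolsr_one: "(x::boolsr) \<noteq> 0 \<Longrightarrow> x = 1"
  by (cases x) (auto simp: zero_boolsr_def one_boolsr_def)

lemma boolsr_mult: "((x::boolsr) * y \<noteq> 0) \<longleftrightarrow> x \<noteq> 0 \<and> y \<noteq> 0"
  by (cases x; cases y) (auto simp: zero_boolsr_def)

lemma boolsr_sum: "finite S \<Longrightarrow> ((\<Sum>x\<in>S. f x :: boolsr) \<noteq> 0) \<longleftrightarrow> (\<exists>x\<in>S. f x \<noteq> 0)"
proof (induction S rule: finite_induct)
  case empty then show ?case by simp
next
  case (insert x F)
  have "\<And>u v :: boolsr. (u + v \<noteq> 0) \<longleftrightarrow> u \<noteq> 0 \<or> v \<noteq> 0"
    subgoal for u v by (cases u; cases v) (auto simp: zero_boolsr_def)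
    done
  then show ?case using insert by auto
qed

lemma behaviour_bool:
  assumes "finite (states A)"
  shows "behaviour (A :: ('a, boolsr) wautomaton) w \<noteq> 0 \<longleftrightarrow>
     (\<exists>p q. reach A p w q \<and> init A p \<noteq> 0 \<and> fin A q \<noteq> 0)"
proof -
  have "behaviour A w \<noteq> 0 \<longleftrightarrow> (\<exists>qs\<in>{qs. is_run A w qs}. run_weight A w qs \<noteq> 0)"
    unfolding behaviour_def using boolsr_sum[OF finite_runs[OF assms]] by blast
  also have "\<dots> \<longleftrightarrow> (\<exists>qs. is_run A w qs \<and> init A (qs ! 0) \<noteq> 0 \<and> fin A (qs ! length w) \<noteq> 0)"
  proof -
    have rw: "\<And>qs. is_run A w qs \<Longrightarrow> run_weight A w qs = init A (qs ! 0) * fin A (qs ! length w)"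
      by (rule run_weight_simple[OF boolsr_one])
    show ?thesis
    proof
      assume "\<exists>qs\<in>{qs. is_run A w qs}. run_weight A w qs \<noteq> 0"
      then obtain qs where q: "is_run A w qs" "run_weight A w qs \<noteq> 0" by blast
      then have "init A (qs ! 0) * fin A (qs ! length w) \<noteq> 0" using rw by simp
      then show "\<exists>qs. is_run A w qs \<and> init A (qs ! 0) \<noteq> 0 \<and> fin A (qs ! length w) \<noteq> 0"
        using q(1) unfolding boolsr_mult by blast
    next
      assume "\<exists>qs. is_run A w qs \<and> init A (qs ! 0) \<noteq> 0 \<and> fin A (qs ! length w) \<noteq> 0"
      then obtain qs where q: "is_run A w qs" "init A (qs ! 0) \<noteq> 0" "fin A (qs ! length w) \<noteq> 0" by blast
      then have "init A (qs ! 0) * fin A (qs ! length w) \<noteq> 0" unfolding boolsr_mult by blast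
      then have "run_weight A w qs \<noteq> 0" using rw q(1) by simp
      then show "\<exists>qs\<in>{qs. is_run A w qs}. run_weight A w qs \<noteq> 0"
        using q(1) by blast
    qed
  qed
  also have "\<dots> \<longleftrightarrow> (\<exists>p q. reach A p w q \<and> init A p \<noteq> 0 \<and> fin A q \<noteq> 0)"
    unfolding reach_run by blast
  finally show ?thesis .
qed

definition img :: "('a, 's::zero) wautomaton \<Rightarrow> 'a \<Rightarrow> nat set \<Rightarrow> nat set" where
  "img A a X = {q\<in>states A. \<exists>p\<in>X. trans A p a q \<noteq> 0}"

definition okk :: "('a, 's::zero) wautomaton \<Rightarrow> 'a \<Rightarrow> nat set \<Rightarrow> bool" where
  "okk A a X \<longleftrightarrow> (\<forall>p\<in>X. \<exists>q\<in>states A. trans A p a q \<noteq> 0)"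

lemma bit_one_plus: "(1 + x = (0::bit)) \<longleftrightarrow> x = 1"
  by (cases x) simp_all

lemma bit_of_nat: "(of_nat n = (0::bit)) \<longleftrightarrow> even n"
proof (induction n)
  case 0 then show ?case by simp
next
  case (Suc n)
  then show ?case by (simp only: of_nat_Suc bit_one_plus even_Suc) (cases "of_nat n :: bit", auto)
qed

definition sub :: "('a, boolsr) wautomaton \<Rightarrow> ('a, bit) wautomaton" where
  "sub A = \<lparr>states = set_encode ` Pow (states A),
     trans = (\<lambda>n a m. of_bool (okk A a (set_decode n) \<and> m = set_encode (img A a (set_decode n)))),
     init = (\<lambda>n. of_bool (set_decode n \<noteq> {} \<and> (\<forall>p\<in>set_decode n. init A p \<noteq> 0))),
     fin = (\<lambda>n. of_bool (\<forall>p\<in>set_decode n. fin A p \<noteq> 0))\<rparr>"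

lemma fin_subset: "finite Q \<Longrightarrow> X \<subseteq> Q \<Longrightarrow> finite X"
  using finite_subset by blast

lemma sub_states:
  assumes "finite (states A)"
  shows "n \<in> states (sub A) \<longleftrightarrow> (\<exists>X. X \<subseteq> states A \<and> n = set_encode X)"
  unfolding sub_def by auto

lemma sub_trans:
  assumes "finite (states A)" "X \<subseteq> states A"
  shows "trans (sub A) (set_encode X) a m \<noteq> 0 \<longleftrightarrow> okk A a X \<and> m = set_encode (img A a X)"
  using assms fin_subset[OF assms] unfolding sub_def by simp

lemma img_sub: "img A a X \<subseteq> states A"
  unfolding img_def by auto

lemma sub_reversible:
  assumes f: "finite (states A)" and r: "reversible A"
  shows "reversible (sub A)"
proof -
  have fi: "\<And>X. X \<subseteq> states A \<Longrightarrow> finite X" using f fin_subset by blast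
  have d: "\<forall>p\<in>states (sub A). \<forall>q\<in>states (sub A). \<forall>q'\<in>states (sub A). \<forall>a.
        trans (sub A) p a q \<noteq> 0 \<and> trans (sub A) p a q' \<noteq> 0 \<longrightarrow> q = q'"
  proof (intro ballI allI impI)
    fix p q q' a
    assume "p \<in> states (sub A)" and h: "trans (sub A) p a q \<noteq> 0 \<and> trans (sub A) p a q' \<noteq> 0"
    then obtain X where X: "X \<subseteq> states A" "p = set_encode X" using sub_states[OF f] by blast
    then show "q = q'" using h sub_trans[OF f X(1)] by simp
  qed
  have c: "\<forall>p\<in>states (sub A). \<forall>p'\<in>states (sub A). \<forall>q\<in>states (sub A). \<forall>a.
        trans (sub A) p a q \<noteq> 0 \<and> trans (sub A) p' a q \<noteq> 0 \<longrightarrow> p = p'"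
  proof (intro ballI allI impI)
    fix p p' q a
    assume "p \<in> states (sub A)" "p' \<in> states (sub A)" and h: "trans (sub A) p a q \<noteq> 0 \<and> trans (sub A) p' a q \<noteq> 0"
    then obtain X X' where X: "X \<subseteq> states A" "p = set_encode X" "X' \<subseteq> states A" "p' = set_encode X'"
      using sub_states[OF f] by metis
    have o: "okk A a X" "okk A a X'" and e: "set_encode (img A a X) = set_encode (img A a X')"
      using h sub_trans[OF f X(1)] sub_trans[OF f X(3)] X by auto
    have ie: "img A a X = img A a X'"
      using e fi[OF img_sub] inj_on_set_encode unfolding inj_on_def by blast
    have cd: "\<And>p p' q. p \<in> states A \<Longrightarrow> p' \<in> states A \<Longrightarrow> q \<in> states A \<Longrightarrow>
        trans A p a q \<noteq> 0 \<Longrightarrow> trans A p' a q \<noteq> 0 \<Longrightarrow> p = p'"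
      using r unfolding reversible_def by blast
    have "X \<subseteq> X'"
    proof
      fix x assume x: "x \<in> X"
      then obtain q where q: "q \<in> states A" "trans A x a q \<noteq> 0" using o unfolding okk_def by blast
      then have "q \<in> img A a X'" using ie x unfolding img_def by auto
      then obtain y where "y \<in> X'" "trans A y a q \<noteq> 0" unfolding img_def by auto
      then show "x \<in> X'" using cd[of x y q] q x X by auto
    qed
    moreover have "X' \<subseteq> X"
    proof
      fix x assume x: "x \<in> X'"
      then obtain q where q: "q \<in> states A" "trans A x a q \<noteq> 0" using o unfolding okk_def by blast
      then have "q \<in> img A a X" using ie x unfolding img_def by auto
      then obtain y where "y \<in> X" "trans A y a q \<noteq> 0" unfolding img_def by auto
      then show "x \<in> X" using cd[of x y q] q x X by auto
    qed
    ultimately show "p = p'" using X by simp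
  qed
  show ?thesis unfolding reversible_def using d c by blast
qed

lemma reversible_det: "reversible A \<Longrightarrow> det A"
  unfolding reversible_def det_def by blast

lemma reach_sub:
  assumes f: "finite (states A)" and d: "det A"
  shows "X \<subseteq> states A \<Longrightarrow> reach (sub A) (set_encode X) w m \<longleftrightarrow>
           (\<forall>p\<in>X. \<exists>q. reach A p w q) \<and> m = set_encode {q. \<exists>p\<in>X. reach A p w q}"
proof (induction w arbitrary: X m)
  case Nil
  have "{q. \<exists>p\<in>X. reach A p [] q} = X" using Nil by auto
  then show ?case using Nil sub_states[OF f] by auto
next
  case (Cons a w)
  have fX: "finite X" using Cons.prems f fin_subset by blast
  have st: "set_encode X \<in> states (sub A)" using Cons.prems sub_states[OF f] by blast
  have "reach (sub A) (set_encode X) (a # w) m \<longleftrightarrow> okk A a X \<and> reach (sub A) (set_encode (img A a X)) w m"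
    using st sub_trans[OF f Cons.prems] by auto
  also have "\<dots> \<longleftrightarrow> okk A a X \<and> (\<forall>p\<in>img A a X. \<exists>q. reach A p w q) \<and>
        m = set_encode {q. \<exists>p\<in>img A a X. reach A p w q}"
    using Cons.IH[OF img_sub] by blast
  also have "\<dots> \<longleftrightarrow> (\<forall>p\<in>X. \<exists>q. reach A p (a # w) q) \<and> m = set_encode {q. \<exists>p\<in>X. reach A p (a # w) q}"
  proof -
    have se: "{q. \<exists>p\<in>img A a X. reach A p w q} = {q. \<exists>p\<in>X. reach A p (a # w) q}"
      using Cons.prems reach_states unfolding img_def by fastforce
    have "okk A a X \<and> (\<forall>p\<in>img A a X. \<exists>q. reach A p w q) \<longleftrightarrow> (\<forall>p\<in>X. \<exists>q. reach A p (a # w) q)"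
    proof
      assume h: "okk A a X \<and> (\<forall>p\<in>img A a X. \<exists>q. reach A p w q)"
      show "\<forall>p\<in>X. \<exists>q. reach A p (a # w) q"
      proof
        fix p assume p: "p \<in> X"
        then obtain p' where "p' \<in> states A" "trans A p a p' \<noteq> 0" using h unfolding okk_def by blast
        then have "p' \<in> img A a X" using p unfolding img_def by auto
        then obtain q where "reach A p' w q" using h by blast
        then show "\<exists>q. reach A p (a # w) q" using p Cons.prems \<open>trans A p a p' \<noteq> 0\<close> by auto
      qed
    next
      assume h: "\<forall>p\<in>X. \<exists>q. reach A p (a # w) q"
      have "okk A a X" unfolding okk_def
      proof
        fix p assume "p \<in> X"
        then obtain q p' where "trans A p a p' \<noteq> 0" "reach A p' w q" using h by auto
        then show "\<exists>q\<in>states A. trans A p a q \<noteq> 0" using reach_states by blast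
      qed
      moreover have "\<forall>p\<in>img A a X. \<exists>q. reach A p w q"
      proof
        fix p' assume "p' \<in> img A a X"
        then obtain p where p: "p \<in> X" "p' \<in> states A" "trans A p a p' \<noteq> 0" unfolding img_def by auto
        then obtain q p'' where q: "trans A p a p'' \<noteq> 0" "reach A p'' w q" using h by auto
        have "p'' \<in> states A" using q reach_states by blast
        then have "p'' = p'" using d p q Cons.prems unfolding det_def by blast
        then show "\<exists>q. reach A p' w q" using q by blast
      qed
      ultimately show "okk A a X \<and> (\<forall>p\<in>img A a X. \<exists>q. reach A p w q)" by blast
    qed
    then show ?thesis by (simp only: se conj_assoc[symmetric])
  qed
  finally show ?case .
qed

lemma odd_pow2_minus1: "odd (2 ^ k - 1 :: nat) \<longleftrightarrow> k \<noteq> 0"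
proof (cases k)
  case 0 then show ?thesis by simp
next
  case (Suc j)
  have "(2::nat) ^ k \<ge> 1" by simp
  moreover have "even ((2::nat) ^ k)" using Suc by simp
  ultimately have "odd (2 ^ k - 1 :: nat)"
    by (simp add: even_diff_nat)
  then show ?thesis using Suc by simp
qed

lemma behaviour_sub:
  assumes f: "finite (states A)" and r: "reversible A"
  shows "behaviour (sub A) w =
    of_nat (2 ^ card {p. init A p \<noteq> 0 \<and> (\<exists>q. reach A p w q \<and> fin A q \<noteq> 0)} - 1)"
proof -
  define S where "S = {p. init A p \<noteq> 0 \<and> (\<exists>q. reach A p w q \<and> fin A q \<noteq> 0)}"
  define IP where "IP = (\<lambda>n. set_decode n \<noteq> {} \<and> (\<forall>p\<in>set_decode n. init A p \<noteq> 0))"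
  define FP where "FP = (\<lambda>n. \<forall>p\<in>set_decode n. fin A p \<noteq> 0)"
  define R where "R = {qs. is_run (sub A) w qs}"
  have SQ: "S \<subseteq> states A" unfolding S_def using reach_states by blast
  have fS: "finite S" using SQ f finite_subset by blast
  have fA': "finite (states (sub A))" unfolding sub_def using f by simp
  have dA': "det (sub A)" using reversible_det sub_reversible[OF f r] by blast
  have dA: "det A" using reversible_det r by blast
  have fi: "\<And>X. X \<subseteq> states A \<Longrightarrow> finite X" using f fin_subset by blast
  have rw: "\<And>qs. is_run (sub A) w qs \<Longrightarrow> run_weight (sub A) w qs = of_bool (IP (qs ! 0) \<and> FP (qs ! length w))"
  proof -
    fix qs assume "is_run (sub A) w qs"
    then have "run_weight (sub A) w qs = init (sub A) (qs ! 0) * fin (sub A) (qs ! length w)"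
      by (rule run_weight_simple[rotated]) simp
    then show "run_weight (sub A) w qs = of_bool (IP (qs ! 0) \<and> FP (qs ! length w))"
      unfolding sub_def IP_def FP_def by simp
  qed
  have "behaviour (sub A) w = (\<Sum>qs\<in>R. of_bool (IP (qs ! 0) \<and> FP (qs ! length w)))"
    unfolding behaviour_def R_def using rw by (intro sum.cong) auto
  also have "\<dots> = of_nat (card (R \<inter> {qs. IP (qs ! 0) \<and> FP (qs ! length w)}))"
    using finite_runs[OF fA'] unfolding R_def by simp
  also have "card (R \<inter> {qs. IP (qs ! 0) \<and> FP (qs ! length w)}) =
      card ((\<lambda>qs. qs ! 0) ` (R \<inter> {qs. IP (qs ! 0) \<and> FP (qs ! length w)}))"
  proof (rule card_image[symmetric])
    show "inj_on (\<lambda>qs. qs ! 0) (R \<inter> {qs. IP (qs ! 0) \<and> FP (qs ! length w)})"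
      unfolding inj_on_def R_def using run_unique[OF dA'] by blast
  qed
  also have "(\<lambda>qs. qs ! 0) ` (R \<inter> {qs. IP (qs ! 0) \<and> FP (qs ! length w)}) =
      set_encode ` {X. X \<noteq> {} \<and> X \<subseteq> S}"
  proof
    show "(\<lambda>qs. qs ! 0) ` (R \<inter> {qs. IP (qs ! 0) \<and> FP (qs ! length w)}) \<subseteq> set_encode ` {X. X \<noteq> {} \<and> X \<subseteq> S}"
    proof
      fix n assume "n \<in> (\<lambda>qs. qs ! 0) ` (R \<inter> {qs. IP (qs ! 0) \<and> FP (qs ! length w)})"
      then obtain qs where qs: "is_run (sub A) w qs" "IP (qs ! 0)" "FP (qs ! length w)" "n = qs ! 0"
        unfolding R_def by blast
      have "reach (sub A) n w (qs ! length w)" using qs reach_run by blast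
      then have "n \<in> states (sub A)" using reach_states by blast
      then obtain X where X: "X \<subseteq> states A" "n = set_encode X" using sub_states[OF f] by blast
      define E where "E = {q. \<exists>p\<in>X. reach A p w q}"
      have "reach (sub A) (set_encode X) w (qs ! length w)" using X \<open>reach (sub A) n w (qs ! length w)\<close> by simp
      then have h: "\<forall>p\<in>X. \<exists>q. reach A p w q" "qs ! length w = set_encode E"
        using reach_sub[OF f dA X(1)] unfolding E_def by auto
      have fE: "finite E" using fi[of E] reach_states unfolding E_def by blast
      have "IP (set_encode X)" using qs(2) qs(4) X(2) by simp
      then have "X \<noteq> {}" "\<forall>p\<in>X. init A p \<noteq> 0" using fi[OF X(1)] unfolding IP_def by auto
      moreover have "\<forall>q\<in>E. fin A q \<noteq> 0" using qs(3) h(2) fE unfolding FP_def by simp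
      ultimately have "X \<subseteq> S" using h(1) unfolding S_def E_def by blast
      then show "n \<in> set_encode ` {X. X \<noteq> {} \<and> X \<subseteq> S}" using X \<open>X \<noteq> {}\<close> by blast
    qed
  next
    show "set_encode ` {X. X \<noteq> {} \<and> X \<subseteq> S} \<subseteq> (\<lambda>qs. qs ! 0) ` (R \<inter> {qs. IP (qs ! 0) \<and> FP (qs ! length w)})"
    proof
      fix n assume "n \<in> set_encode ` {X. X \<noteq> {} \<and> X \<subseteq> S}"
      then obtain X where X: "X \<noteq> {}" "X \<subseteq> S" "n = set_encode X" by blast
      have XQ: "X \<subseteq> states A" using X SQ by blast
      define E where "E = {q. \<exists>p\<in>X. reach A p w q}"
      have fE: "finite E" using fi[of E] reach_states unfolding E_def by blast
      have "\<forall>p\<in>X. \<exists>q. reach A p w q" using X unfolding S_def by blast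
      then have "reach (sub A) n w (set_encode E)" using reach_sub[OF f dA XQ] X unfolding E_def by simp
      then obtain qs where qs: "is_run (sub A) w qs" "qs ! 0 = n" "qs ! length w = set_encode E"
        using reach_run by blast
      have "IP n" using X XQ fi[OF XQ] unfolding IP_def S_def by auto
      moreover have "FP (set_encode E)"
      proof -
        have "\<forall>q\<in>E. fin A q \<noteq> 0"
        proof
          fix q assume "q \<in> E"
          then obtain p where p: "p \<in> X" "reach A p w q" unfolding E_def by blast
          then obtain q' where "reach A p w q'" "fin A q' \<noteq> 0" using X unfolding S_def by blast
          then show "fin A q \<noteq> 0" using reach_det[OF dA p(2)] by simp
        qed
        then show ?thesis unfolding FP_def using fE by simp
      qed
      ultimately show "n \<in> (\<lambda>qs. qs ! 0) ` (R \<inter> {qs. IP (qs ! 0) \<and> FP (qs ! length w)})"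
        using qs unfolding R_def by (metis (mono_tags, lifting) IntI image_eqI mem_Collect_eq)
    qed
  qed
  also have "card (set_encode ` {X. X \<noteq> {} \<and> X \<subseteq> S}) = card {X. X \<noteq> {} \<and> X \<subseteq> S}"
  proof (rule card_image)
    show "inj_on set_encode {X. X \<noteq> {} \<and> X \<subseteq> S}"
      using inj_on_subset[OF inj_on_set_encode] fS finite_subset by (metis (mono_tags, lifting) mem_Collect_eq subsetI)
  qed
  also have "{X. X \<noteq> {} \<and> X \<subseteq> S} = Pow S - {{}}" by auto
  also have "card (Pow S - {{}}) = 2 ^ card S - 1" using fS by (simp add: card_Pow)
  finally show ?thesis unfolding S_def .
qed

theorem lemma1:
  "RevL TYPE(boolsr) TYPE('a::finite) \<subseteq> RevL TYPE(bit) TYPE('a::finite)"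
proof
  fix L assume "L \<in> RevL TYPE(boolsr) TYPE('a::finite)"
  then obtain A :: "('a, boolsr) wautomaton" where A: "finite (states A)" "reversible A"
    "L = support (behaviour A)" unfolding RevL_def by blast
  have "support (behaviour (sub A)) = support (behaviour A)"
  proof (rule set_eqI)
    fix w
    define S where "S = {p. init A p \<noteq> 0 \<and> (\<exists>q. reach A p w q \<and> fin A q \<noteq> 0)}"
    have "S \<subseteq> states A" unfolding S_def using reach_states by blast
    then have fS: "finite S" using A(1) finite_subset by blast
    have bs: "behaviour (sub A) w = of_nat (2 ^ card S - 1)"
      unfolding S_def by (rule behaviour_sub[OF A(1,2)])
    have "w \<in> support (behaviour (sub A)) \<longleftrightarrow> odd (2 ^ card S - 1 :: nat)"
      by (simp add: support_def bs bit_of_nat del: bit_not_zero_iff)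
    also have "\<dots> \<longleftrightarrow> S \<noteq> {}" using fS odd_pow2_minus1 by simp
    also have "\<dots> \<longleftrightarrow> (\<exists>p q. reach A p w q \<and> init A p \<noteq> 0 \<and> fin A q \<noteq> 0)"
      unfolding S_def by blast
    also have "\<dots> \<longleftrightarrow> w \<in> support (behaviour A)"
      unfolding support_def using behaviour_bool[OF A(1)] by simp
    finally show "w \<in> support (behaviour (sub A)) \<longleftrightarrow> w \<in> support (behaviour A)" .
  qed
  moreover have "finite (states (sub A))" unfolding sub_def using A(1) by simp
  moreover have "reversible (sub A)" using sub_reversible A by blast
  ultimately show "L \<in> RevL TYPE(bit) TYPE('a::finite)"
    unfolding RevL_def using A(3) by (intro CollectI exI[of _ "sub A"]) simp
qed

end
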